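(* Let $G$ be a connected graph with $n$ vertices and let $l\ge 2$. Let $B_{n\times l}^2$ be a graph obtained from $l$ disjoint copies $G_{n,1},\dots,G_{n,l}$ of $G$ by adding, for each $1\le i\le l-1$, a single edge joining some vertex of $G_{n,i}$ to some vertex of $G_{n,i+1}$. Then $$0 < \lambda_2(B_{n\times l}^2) \le 2.$$
   Context: All graphs are finite, simple and unweighted. For a graph $H$ with adjacency matrix $A$ and diagonal degree matrix $D$, the graph Laplacian is $L_H = D - A$, with eigenvalues ordered $0=\lambda_1 \le \lambda_2 \le \dots$; $\lambda_2(H)$ denotes the second smallest eigenvalue of $L_H$. *)

theory Defs
  imports "Jordan_Normal_Form.Char_Poly" "HOL-Library.Multiset"
begin

definition simple_graph :: "nat \<Rightarrow> (nat \<Rightarrow> nat \<Rightarrow> bool) \<Rightarrow> bool" where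
  "simple_graph n E \<longleftrightarrow> (\<forall>u v. E u v \<longrightarrow> u < n \<and> v < n \<and> u \<noteq> v \<and> E v u)"

definition connected_graph :: "nat \<Rightarrow> (nat \<Rightarrow> nat \<Rightarrow> bool) \<Rightarrow> bool" where
  "connected_graph n E \<longleftrightarrow> n \<ge> 1 \<and> (\<forall>u<n. \<forall>v<n. E\<^sup>*\<^sup>* u v)"

definition laplacian :: "nat \<Rightarrow> (nat \<Rightarrow> nat \<Rightarrow> bool) \<Rightarrow> real mat" where
  "laplacian n E = mat n n (\<lambda>(i, j). if i = j then real (card {k. k < n \<and> E i k})
                                      else if E i j then -1 else 0)"

definition lap_eigenvalues :: "nat \<Rightarrow> (nat \<Rightarrow> nat \<Rightarrow> bool) \<Rightarrow> real list" where
  "lap_eigenvalues n E = sorted_list_of_multiset (proots (char_poly (laplacian n E)))"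

definition lambda2 :: "nat \<Rightarrow> (nat \<Rightarrow> nat \<Rightarrow> bool) \<Rightarrow> real" where
  "lambda2 n E = lap_eigenvalues n E ! 1"

text \<open>The graph B: l disjoint copies of G (copy i occupies vertices i*n + v, v < n),
  plus, for each i with i+1 < l, one edge joining vertex a i of copy i to vertex b i
  of copy i+1.\<close>
definition chain_graph :: "nat \<Rightarrow> (nat \<Rightarrow> nat \<Rightarrow> bool) \<Rightarrow> nat \<Rightarrow> (nat \<Rightarrow> nat) \<Rightarrow> (nat \<Rightarrow> nat)
    \<Rightarrow> nat \<Rightarrow> nat \<Rightarrow> bool" where
  "chain_graph n E l a b x y \<longleftrightarrow> x < l * n \<and> y < l * n \<and>
     ((x div n = y div n \<and> E (x mod n) (y mod n)) \<or>
      (\<exists>i. Suc i < l \<and> ((x = i * n + a i \<and> y = Suc i * n + b i) \<or>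
                          (y = i * n + a i \<and> x = Suc i * n + b i))))"

end

theory Submission
  imports Defs "Jordan_Normal_Form.Schur_Decomposition"
begin


lemma sym_real_eigen_real:
  fixes A :: "real mat" and a :: complex
  assumes A: "A \<in> carrier_mat n n" and sym: "\<And>i j. i < n \<Longrightarrow> j < n \<Longrightarrow> A $$ (i,j) = A $$ (j,i)"
    and ev: "eigenvalue (map_mat complex_of_real A) a"
  shows "Im a = 0"
proof -
  let ?Ac = "map_mat complex_of_real A"
  from ev obtain v where v: "eigenvector ?Ac v a" unfolding eigenvalue_def by auto
  hence vc: "v \<in> carrier_vec n" and v0: "v \<noteq> 0\<^sub>v n" and Av: "?Ac *\<^sub>v v = a \<cdot>\<^sub>v v"
    using A unfolding eigenvector_def by auto
  define X where "X = (\<Sum>i<n. \<Sum>j<n. cnj (v$i) * of_real (A$$(i,j)) * v$j)"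
  define S where "S = (\<Sum>i<n. cnj (v$i) * v$i)"
  have "X = (\<Sum>i<n. cnj (v$i) * (?Ac *\<^sub>v v)$i)"
    unfolding X_def using A vc
    by (auto simp: mult_mat_vec_def scalar_prod_def sum_distrib_left mult.assoc intro!: sum.cong)
  also have "\<dots> = a * S" unfolding S_def using Av vc
    by (auto simp: sum_distrib_left intro!: sum.cong)
  finally have XaS: "X = a * S" .
  have "cnj X = (\<Sum>i<n. \<Sum>j<n. v$i * of_real (A$$(i,j)) * cnj (v$j))"
    unfolding X_def by (simp add: cnj_sum)
  also have "\<dots> = (\<Sum>j<n. \<Sum>i<n. v$i * of_real (A$$(i,j)) * cnj (v$j))"
    by (rule sum.swap)
  also have "\<dots> = X" unfolding X_def
    by (intro sum.cong refl, auto simp: sym mult.commute mult.left_commute)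
  finally have cX: "cnj X = X" .
  have Sre: "S = of_real (\<Sum>i<n. (cmod (v$i))^2)"
    unfolding S_def of_real_sum by (intro sum.cong refl) (metis complex_norm_square of_real_power mult.commute)
  from v0 vc obtain k where k: "k < n" "v$k \<noteq> 0" by (metis dim_vec eq_vecI index_zero_vec(1) index_zero_vec(2) carrier_vecD)
  have "(\<Sum>i<n. (cmod (v$i))^2) > 0"
  proof -
    have "(\<Sum>i<n. (cmod (v$i))^2) \<ge> (cmod (v$k))^2"
      using k by (intro member_le_sum) auto
    moreover have "(cmod (v$k))^2 > 0" using k by simp
    ultimately show ?thesis by linarith
  qed
  then have S0: "S \<noteq> 0" by (metis Sre of_real_eq_0_iff less_irrefl)
  have cS: "cnj S = S" unfolding Sre by (rule complex_cnj_complex_of_real)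
  have "a = X / S" using XaS S0 by simp
  hence "cnj a = a" using cX cS by simp
  thus "Im a = 0" using Reals_cnj_iff complex_is_Real_iff by metis
qed

lemma sym_real_char_poly_split:
  fixes A :: "real mat"
  assumes A: "A \<in> carrier_mat n n" and sym: "\<And>i j. i < n \<Longrightarrow> j < n \<Longrightarrow> A $$ (i,j) = A $$ (j,i)"
  shows "\<exists>es. char_poly A = (\<Prod>e\<leftarrow>es. [:-e, 1:]) \<and> length es = n"
proof -
  let ?Ac = "map_mat complex_of_real A"
  have Ac: "?Ac \<in> carrier_mat n n" using A by auto
  obtain as where cas: "char_poly ?Ac = (\<Prod>a\<leftarrow>as. [:-a, 1:])" and len: "length as = n"
    using char_poly_factorized[OF Ac] by blast
  have re: "Im a = 0" if "a \<in> set as" for a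
  proof (rule sym_real_eigen_real[OF A sym])
    show "eigenvalue ?Ac a" unfolding eigenvalue_root_char_poly[OF Ac] cas
      using linear_poly_root[OF that] .
  qed (auto)
  define es where "es = map Re as"
  interpret mp: map_poly_comm_ring_hom "complex_of_real" ..
  have "map_poly complex_of_real (\<Prod>e\<leftarrow>es. [:-e, 1:]) = (\<Prod>e\<leftarrow>es. map_poly complex_of_real [:-e, 1:])"
    unfolding mp.hom_prod_list map_map o_def by simp
  also have "\<dots> = (\<Prod>a\<leftarrow>as. [:-a, 1:])" unfolding es_def using re
    by (induction as) (auto simp: complex_eq_iff)
  also have "\<dots> = map_poly complex_of_real (char_poly A)"
    unfolding cas[symmetric] by (rule of_real_hom.char_poly_hom[OF A])
  finally have eq: "map_poly complex_of_real (\<Prod>e\<leftarrow>es. [:-e, 1:]) = map_poly complex_of_real (char_poly A)" .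
  have "char_poly A = (\<Prod>e\<leftarrow>es. [:-e, 1:])"
  proof (rule poly_eqI)
    fix i
    from arg_cong[OF eq, of "\<lambda>p. coeff p i"]
    show "coeff (char_poly A) i = coeff (\<Prod>e\<leftarrow>es. [:-e, 1:]) i" by (simp add: coeff_map_poly)
  qed
  moreover have "length es = n" using len es_def by simp
  ultimately show ?thesis by blast
qed


definition mtrace :: "'a::comm_ring_1 mat \<Rightarrow> 'a" where
  "mtrace A = (\<Sum>i<dim_row A. A $$ (i,i))"

lemma mtrace_comm:
  fixes A B :: "'a::comm_ring_1 mat"
  assumes A: "A \<in> carrier_mat n m" and B: "B \<in> carrier_mat m n"
  shows "mtrace (A * B) = mtrace (B * A)"
proof -
  have "mtrace (A * B) = (\<Sum>i<n. \<Sum>k<m. A $$ (i,k) * B $$ (k,i))"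
    unfolding mtrace_def using A B
    by (auto simp: scalar_prod_def atLeast0LessThan intro!: sum.cong)
  also have "\<dots> = (\<Sum>k<m. \<Sum>i<n. B $$ (k,i) * A $$ (i,k))"
    by (subst sum.swap) (simp add: mult.commute)
  also have "\<dots> = mtrace (B * A)"
    unfolding mtrace_def using A B
    by (auto simp: scalar_prod_def atLeast0LessThan intro!: sum.cong)
  finally show ?thesis .
qed

lemma mtrace_split:
  fixes A :: "real mat"
  assumes A: "A \<in> carrier_mat n n" and cp: "char_poly A = (\<Prod>e\<leftarrow>es. [:-e, 1:])"
  shows "mtrace A = sum_list es"
proof -
  obtain B P Q where sd: "schur_decomposition A es = (B,P,Q)" by (cases "schur_decomposition A es") auto
  from schur_decomposition[OF A cp sd] have sim: "similar_mat_wit A B P Q" and dg: "diag_mat B = es" by auto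
  from sim A have B: "B \<in> carrier_mat n n" and P: "P \<in> carrier_mat n n" and Q: "Q \<in> carrier_mat n n"
    and QP: "Q * P = 1\<^sub>m n" and AE: "A = P * B * Q"
    unfolding similar_mat_wit_def Let_def by auto
  have "mtrace A = mtrace (Q * (P * B))" unfolding AE
    by (rule mtrace_comm[of _ n n], insert P B Q, auto)
  also have "Q * (P * B) = (Q * P) * B" using P B Q by (simp add: assoc_mult_mat)
  also have "\<dots> = B" using QP B by simp
  also have "mtrace B = sum_list es" unfolding dg[symmetric] mtrace_def diag_mat_def
    using B by (simp add: sum_list_sum_nth atLeast0LessThan)
  finally show ?thesis .
qed

lemma sp_sum: "v \<in> carrier_vec n \<Longrightarrow> u \<bullet> v = (\<Sum>i<n. u $ i * v $ i)"
  by (auto simp: scalar_prod_def atLeast0LessThan)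

lemma mv_sum: "A \<in> carrier_mat n m \<Longrightarrow> v \<in> carrier_vec m \<Longrightarrow> i < n \<Longrightarrow> (A *\<^sub>v v) $ i = (\<Sum>j<m. A $$ (i,j) * v $ j)"
  by (auto simp: mult_mat_vec_def scalar_prod_def atLeast0LessThan)



lemma ext_eigen:
  fixes A :: "real mat" and us :: "real vec list" and ds :: "real list"
  assumes A: "A \<in> carrier_mat n n" and sym: "\<And>i j. i < n \<Longrightarrow> j < n \<Longrightarrow> A $$ (i,j) = A $$ (j,i)"
    and kn: "k < n" and lu: "length us = k" and ld: "length ds = k"
    and uc: "\<And>t. t < k \<Longrightarrow> us ! t \<in> carrier_vec n"
    and on: "\<And>s t. s < k \<Longrightarrow> t < k \<Longrightarrow> us ! s \<bullet> us ! t = (if s = t then 1 else 0)"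
    and eig: "\<And>t. t < k \<Longrightarrow> A *\<^sub>v us ! t = ds ! t \<cdot>\<^sub>v us ! t"
  shows "\<exists>v \<mu>. v \<in> carrier_vec n \<and> v \<bullet> v = 1 \<and> (\<forall>t<k. us ! t \<bullet> v = 0) \<and> A *\<^sub>v v = \<mu> \<cdot>\<^sub>v v"
proof -
  define u where "u t i = us ! t $ i" for t i
  have on': "(\<Sum>i<n. u s i * u t i) = (if s = t then 1 else 0)" if "s < k" "t < k" for s t
    using on[OF that] sp_sum[OF uc[OF that(2)]] unfolding u_def by simp
  have eig': "(\<Sum>j<n. A $$ (i,j) * u t j) = ds ! t * u t i" if "t < k" "i < n" for t i
  proof -
    have "(A *\<^sub>v us ! t) $ i = (ds ! t \<cdot>\<^sub>v us ! t) $ i" using eig[OF that(1)] by simp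
    thus ?thesis using mv_sum[OF A uc[OF that(1)] that(2)] uc[OF that(1)] that(2) unfolding u_def by simp
  qed
  define T where "T = mtrace A - (\<Sum>t<k. ds ! t)"
  define c where "c = T / real (n - k) + 1"
  define M where "M = mat n n (\<lambda>(i,j). A $$ (i,j) + (\<Sum>t<k. (c - ds ! t) * (u t i * u t j)))"
  have M: "M \<in> carrier_mat n n" unfolding M_def by simp
  have Msym: "M $$ (i,j) = M $$ (j,i)" if "i < n" "j < n" for i j
    unfolding M_def using that sym by (auto simp: mult.commute)
  obtain es where cp: "char_poly M = (\<Prod>e\<leftarrow>es. [:-e, 1:])" and les: "length es = n"
    using sym_real_char_poly_split[OF M Msym] by blast
  have trM: "mtrace M = sum_list es" by (rule mtrace_split[OF M cp])
  have "mtrace M = (\<Sum>i<n. A $$ (i,i) + (\<Sum>t<k. (c - ds ! t) * (u t i * u t i)))"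
    unfolding mtrace_def M_def by simp
  also have "\<dots> = mtrace A + (\<Sum>t<k. (c - ds ! t) * (\<Sum>i<n. u t i * u t i))"
    unfolding mtrace_def sum.distrib using A by (simp add: sum_distrib_left sum.swap[of _ "{..<n}"])
  also have "\<dots> = mtrace A + (\<Sum>t<k. (c - ds ! t))"
    using on' by simp
  also have "\<dots> = mtrace A + real k * c - (\<Sum>t<k. ds ! t)"
    by (simp add: sum_subtractf)
  finally have trM2: "mtrace M = mtrace A + real k * c - (\<Sum>t<k. ds ! t)" .
  have "\<exists>\<mu>\<in>set es. \<mu> \<noteq> c"
  proof (rule ccontr)
    assume "\<not> ?thesis"
    hence "es = replicate n c" using les by (metis replicate_eqI)
    hence "sum_list es = real n * c" by (simp add: sum_list_replicate)
    hence "T = real (n - k) * c" using trM trM2 unfolding T_def using kn by (simp add: of_nat_diff algebra_simps)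
    moreover have pos: "real (n - k) > 0" using kn by simp
    moreover have "real (n - k) * c = T + real (n - k)" unfolding c_def using pos by (simp add: field_simps)
    ultimately show False by simp
  qed
  then obtain \<mu> where mues: "\<mu> \<in> set es" and muc: "\<mu> \<noteq> c" by blast
  have "eigenvalue M \<mu>" unfolding eigenvalue_root_char_poly[OF M] cp by (rule linear_poly_root[OF mues])
  then obtain w where "eigenvector M w \<mu>" unfolding eigenvalue_def by blast
  hence wc: "w \<in> carrier_vec n" and w0: "w \<noteq> 0\<^sub>v n" and Mw: "M *\<^sub>v w = \<mu> \<cdot>\<^sub>v w"
    using M unfolding eigenvector_def by auto
  define y where "y t = (\<Sum>j<n. u t j * w $ j)" for t
  have Mwi: "(\<Sum>j<n. M $$ (i,j) * w $ j) = (\<Sum>j<n. A $$ (i,j) * w $ j) + (\<Sum>t<k. (c - ds ! t) * u t i * y t)"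
    if "i < n" for i
  proof -
    have "(\<Sum>j<n. M $$ (i,j) * w $ j) = (\<Sum>j<n. A $$ (i,j) * w $ j + (\<Sum>t<k. (c - ds ! t) * u t i * (u t j * w $ j)))"
    proof (intro sum.cong refl)
      fix j assume "j \<in> {..<n}"
      hence "M $$ (i,j) = A $$ (i,j) + (\<Sum>t<k. (c - ds ! t) * (u t i * u t j))" unfolding M_def using that by simp
      hence "M $$ (i,j) * w $ j = A $$ (i,j) * w $ j + (\<Sum>t<k. (c - ds ! t) * (u t i * u t j) * w $ j)"
        by (simp add: distrib_right sum_distrib_right)
      also have "(\<Sum>t<k. (c - ds ! t) * (u t i * u t j) * w $ j) = (\<Sum>t<k. (c - ds ! t) * u t i * (u t j * w $ j))"
        by (simp add: mult.assoc)
      finally show "M $$ (i,j) * w $ j = A $$ (i,j) * w $ j + (\<Sum>t<k. (c - ds ! t) * u t i * (u t j * w $ j))" .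
    qed
    also have "\<dots> = (\<Sum>j<n. A $$ (i,j) * w $ j) + (\<Sum>t<k. (c - ds ! t) * u t i * y t)"
      unfolding sum.distrib y_def by (simp add: sum_distrib_left sum.swap[of _ "{..<n}"])
    finally show ?thesis .
  qed
  have Mwi2: "(\<Sum>j<n. M $$ (i,j) * w $ j) = \<mu> * w $ i" if "i < n" for i
  proof -
    have "(M *\<^sub>v w) $ i = (\<mu> \<cdot>\<^sub>v w) $ i" using Mw by simp
    thus ?thesis using mv_sum[OF M wc that] wc that by simp
  qed
  have y0: "y s = 0" if s: "s < k" for s
  proof -
    have "(\<Sum>i<n. u s i * (\<Sum>j<n. M $$ (i,j) * w $ j)) = \<mu> * y s"
      using Mwi2 unfolding y_def by (simp add: sum_distrib_left algebra_simps)
    moreover have "(\<Sum>i<n. u s i * (\<Sum>j<n. M $$ (i,j) * w $ j))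
       = (\<Sum>i<n. u s i * (\<Sum>j<n. A $$ (i,j) * w $ j)) + (\<Sum>i<n. u s i * (\<Sum>t<k. (c - ds ! t) * u t i * y t))"
      using Mwi by (simp add: algebra_simps sum.distrib)
    moreover have "(\<Sum>i<n. u s i * (\<Sum>j<n. A $$ (i,j) * w $ j)) = ds ! s * y s"
    proof -
      have "(\<Sum>i<n. u s i * (\<Sum>j<n. A $$ (i,j) * w $ j)) = (\<Sum>i<n. \<Sum>j<n. u s i * A $$ (i,j) * w $ j)"
        by (simp add: sum_distrib_left mult.assoc)
      also have "\<dots> = (\<Sum>j<n. \<Sum>i<n. u s i * A $$ (i,j) * w $ j)" by (rule sum.swap)
      also have "\<dots> = (\<Sum>j<n. (\<Sum>i<n. A $$ (j,i) * u s i) * w $ j)"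
      proof (intro sum.cong refl)
        fix j assume j: "j \<in> {..<n}"
        have "(\<Sum>i<n. A $$ (j,i) * u s i) * w $ j = (\<Sum>i<n. A $$ (j,i) * u s i * w $ j)"
          by (simp add: sum_distrib_right)
        also have "\<dots> = (\<Sum>i<n. u s i * A $$ (i,j) * w $ j)"
          using j by (intro sum.cong refl) (simp add: sym mult.commute)
        finally show "(\<Sum>i<n. u s i * A $$ (i,j) * w $ j) = (\<Sum>i<n. A $$ (j,i) * u s i) * w $ j" by simp
      qed
      also have "\<dots> = (\<Sum>j<n. ds ! s * u s j * w $ j)" using eig'[OF s] by simp
      finally show ?thesis unfolding y_def by (simp add: sum_distrib_left algebra_simps)
    qed
    moreover have "(\<Sum>i<n. u s i * (\<Sum>t<k. (c - ds ! t) * u t i * y t)) = (c - ds ! s) * y s"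
    proof -
      have "(\<Sum>i<n. u s i * (\<Sum>t<k. (c - ds ! t) * u t i * y t)) = (\<Sum>t<k. (c - ds ! t) * y t * (\<Sum>i<n. u s i * u t i))"
        by (simp add: sum_distrib_left sum.swap[of _ "{..<n}"] algebra_simps)
      also have "\<dots> = (\<Sum>t<k. if t = s then (c - ds ! t) * y t else 0)"
        using on' s by (intro sum.cong) auto
      also have "\<dots> = (c - ds ! s) * y s" using s by simp
      finally show ?thesis .
    qed
    ultimately have "\<mu> * y s = c * y s" by (simp add: algebra_simps)
    thus ?thesis using muc by simp
  qed
  have Aw: "A *\<^sub>v w = \<mu> \<cdot>\<^sub>v w"
  proof (rule eq_vecI)
    fix i assume "i < dim_vec (\<mu> \<cdot>\<^sub>v w)"
    hence i: "i < n" using wc by simp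
    have "(A *\<^sub>v w) $ i = (\<Sum>j<n. A $$ (i,j) * w $ j)" by (rule mv_sum[OF A wc i])
    also have "\<dots> = \<mu> * w $ i" using Mwi[OF i] Mwi2[OF i] y0 by simp
    finally show "(A *\<^sub>v w) $ i = (\<mu> \<cdot>\<^sub>v w) $ i" using i wc by simp
  qed (insert A wc, auto)
  have ww: "w \<bullet> w > 0"
  proof -
    from w0 wc obtain i where i: "i < n" "w $ i \<noteq> 0"
      by (metis carrier_vecD eq_vecI index_zero_vec(1) index_zero_vec(2))
    have "w \<bullet> w = (\<Sum>j<n. (w $ j)^2)" using sp_sum[OF wc] by (simp add: power2_eq_square)
    also have "\<dots> \<ge> (w $ i)^2" using i by (intro member_le_sum) auto
    finally show ?thesis using i by (smt (verit) zero_less_power2)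
  qed
  define v where "v = (1 / sqrt (w \<bullet> w)) \<cdot>\<^sub>v w"
  have vc: "v \<in> carrier_vec n" unfolding v_def using wc by simp
  have "v \<bullet> v = (1 / sqrt (w \<bullet> w)) * (1 / sqrt (w \<bullet> w)) * (w \<bullet> w)"
    unfolding v_def using wc by (simp add: smult_scalar_prod_distrib scalar_prod_smult_distrib)
  also have "\<dots> = 1" using ww by (simp add: field_simps)
  finally have vv: "v \<bullet> v = 1" .
  have ortho: "\<forall>t<k. us ! t \<bullet> v = 0"
  proof (intro allI impI)
    fix t assume t: "t < k"
    have "us ! t \<bullet> w = y t" using sp_sum[OF wc] unfolding y_def u_def by simp
    thus "us ! t \<bullet> v = 0" unfolding v_def using wc uc[OF t] y0[OF t]
      by (simp add: scalar_prod_smult_distrib)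
  qed
  have Av: "A *\<^sub>v v = \<mu> \<cdot>\<^sub>v v"
    unfolding v_def using A wc Aw by (simp add: mult_mat_vec smult_smult_assoc mult.commute)
  show ?thesis using vc vv ortho Av by blast
qed


definition eig_sys :: "real mat \<Rightarrow> nat \<Rightarrow> nat \<Rightarrow> real vec list \<Rightarrow> real list \<Rightarrow> bool" where
  "eig_sys A n k us ds \<longleftrightarrow> length us = k \<and> length ds = k \<and> (\<forall>t<k. us ! t \<in> carrier_vec n)
     \<and> (\<forall>s<k. \<forall>t<k. us ! s \<bullet> us ! t = (if s = t then 1 else 0))
     \<and> (\<forall>t<k. A *\<^sub>v us ! t = ds ! t \<cdot>\<^sub>v us ! t)"

lemma eig_sys_exists:
  fixes A :: "real mat"
  assumes A: "A \<in> carrier_mat n n" and sym: "\<And>i j. i < n \<Longrightarrow> j < n \<Longrightarrow> A $$ (i,j) = A $$ (j,i)"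
  shows "k \<le> n \<Longrightarrow> \<exists>us ds. eig_sys A n k us ds"
proof (induction k)
  case 0
  show ?case by (rule exI[of _ "[]"], rule exI[of _ "[]"]) (simp add: eig_sys_def)
next
  case (Suc k)
  then obtain us ds where es: "eig_sys A n k us ds" by auto
  hence lu: "length us = k" and ld: "length ds = k" and uc: "\<And>t. t < k \<Longrightarrow> us ! t \<in> carrier_vec n"
    and on: "\<And>s t. s < k \<Longrightarrow> t < k \<Longrightarrow> us ! s \<bullet> us ! t = (if s = t then 1 else 0)"
    and eig: "\<And>t. t < k \<Longrightarrow> A *\<^sub>v us ! t = ds ! t \<cdot>\<^sub>v us ! t"
    unfolding eig_sys_def by auto
  from ext_eigen[OF A sym _ lu ld uc on eig] Suc.prems obtain v \<mu> where
    vc: "v \<in> carrier_vec n" and vv: "v \<bullet> v = 1" and ort: "\<forall>t<k. us ! t \<bullet> v = 0" and Av: "A *\<^sub>v v = \<mu> \<cdot>\<^sub>v v"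
    by auto
  have ort2: "v \<bullet> us ! t = 0" if "t < k" for t
    using ort that comm_scalar_prod[OF vc uc[OF that]] by simp
  have "eig_sys A n (Suc k) (us @ [v]) (ds @ [\<mu>])"
    unfolding eig_sys_def
  proof (intro conjI allI impI)
    fix t assume "t < Suc k" thus "(us @ [v]) ! t \<in> carrier_vec n"
      using uc vc lu by (cases "t < k") (auto simp: nth_append)
  next
    fix s t assume "s < Suc k" "t < Suc k"
    thus "(us @ [v]) ! s \<bullet> (us @ [v]) ! t = (if s = t then 1 else 0)"
      using on ort ort2 vv lu by (cases "s < k"; cases "t < k") (auto simp: nth_append)
  next
    fix t assume "t < Suc k" thus "A *\<^sub>v (us @ [v]) ! t = (ds @ [\<mu>]) ! t \<cdot>\<^sub>v (us @ [v]) ! t"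
      using eig Av lu ld by (cases "t < k") (auto simp: nth_append)
  qed (use lu ld in auto)
  thus ?case by blast
qed

lemma spectral:
  fixes A :: "real mat"
  assumes A: "A \<in> carrier_mat n n" and sym: "\<And>i j. i < n \<Longrightarrow> j < n \<Longrightarrow> A $$ (i,j) = A $$ (j,i)"
  shows "\<exists>us ds. eig_sys A n n us ds \<and> char_poly A = (\<Prod>d\<leftarrow>ds. [:-d, 1:])
     \<and> (\<forall>i<n. \<forall>j<n. (\<Sum>t<n. us ! t $ i * us ! t $ j) = (if i = j then 1 else 0))"
proof -
  obtain us ds where es: "eig_sys A n n us ds" using eig_sys_exists[OF A sym, of n] by auto
  hence lu: "length us = n" and ld: "length ds = n" and uc: "\<And>t. t < n \<Longrightarrow> us ! t \<in> carrier_vec n"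
    and on: "\<And>s t. s < n \<Longrightarrow> t < n \<Longrightarrow> us ! s \<bullet> us ! t = (if s = t then 1 else 0)"
    and eig: "\<And>t. t < n \<Longrightarrow> A *\<^sub>v us ! t = ds ! t \<cdot>\<^sub>v us ! t"
    unfolding eig_sys_def by auto
  define Om where "Om = mat n n (\<lambda>(i,j). us ! j $ i)"
  define D where "D = mat n n (\<lambda>(i,j). if i = j then ds ! i else (0::real))"
  have Omc: "Om \<in> carrier_mat n n" and Dc: "D \<in> carrier_mat n n" and Otc: "transpose_mat Om \<in> carrier_mat n n"
    unfolding Om_def D_def by auto
  have OtO: "transpose_mat Om * Om = 1\<^sub>m n"
  proof (rule eq_matI)
    fix i j assume ij: "i < dim_row (1\<^sub>m n)" "j < dim_col (1\<^sub>m n)"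
    hence "(transpose_mat Om * Om) $$ (i,j) = (\<Sum>r<n. us ! i $ r * us ! j $ r)"
      unfolding Om_def by (auto simp: scalar_prod_def atLeast0LessThan)
    also have "\<dots> = us ! i \<bullet> us ! j" using sp_sum[OF uc] ij by simp
    also have "\<dots> = 1\<^sub>m n $$ (i,j)" using on ij by simp
    finally show "(transpose_mat Om * Om) $$ (i,j) = 1\<^sub>m n $$ (i,j)" .
  qed (auto simp: Om_def)
  have OOt: "Om * transpose_mat Om = 1\<^sub>m n" by (rule mat_mult_left_right_inverse[OF Otc Omc OtO])
  have AO: "A * Om = Om * D"
  proof (rule eq_matI)
    fix i j assume ij: "i < dim_row (Om * D)" "j < dim_col (Om * D)"
    hence ij: "i < n" "j < n" unfolding Om_def D_def by auto
    have "(A * Om) $$ (i,j) = (A *\<^sub>v us ! j) $ i"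
      using A ij uc[OF ij(2)] unfolding Om_def by (auto simp: mult_mat_vec_def scalar_prod_def)
    also have "\<dots> = ds ! j * us ! j $ i" using eig[OF ij(2)] uc[OF ij(2)] ij by simp
    also have "\<dots> = (Om * D) $$ (i,j)"
    proof -
      have "(Om * D) $$ (i,j) = (\<Sum>r<n. us ! r $ i * (if r = j then ds ! r else 0))"
        using ij unfolding Om_def D_def by (auto simp: scalar_prod_def atLeast0LessThan intro!: sum.cong)
      also have "\<dots> = us ! j $ i * ds ! j" using ij
        by (simp add: if_distrib cong: if_cong)
      finally show ?thesis by simp
    qed
    finally show "(A * Om) $$ (i,j) = (Om * D) $$ (i,j)" .
  qed (insert A, auto simp: Om_def D_def)
  have "A = A * (Om * transpose_mat Om)" using A OOt by simp
  also have "\<dots> = (A * Om) * transpose_mat Om" using A Omc Otc by (simp add: assoc_mult_mat)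
  also have "\<dots> = Om * D * transpose_mat Om" unfolding AO ..
  finally have AE: "A = Om * D * transpose_mat Om" .
  have "similar_mat A D"
    by (rule similar_matI[where n=n and P=Om and Q="transpose_mat Om"], insert A Omc Dc Otc OOt OtO AE, auto)
  hence "char_poly A = char_poly D" by (rule char_poly_similar)
  also have "\<dots> = (\<Prod>d\<leftarrow>diag_mat D. [:-d, 1:])"
    by (rule char_poly_upper_triangular[OF Dc], auto simp: upper_triangular_def D_def)
  also have "diag_mat D = ds" unfolding diag_mat_def D_def using ld
    by (simp add: list_eq_iff_nth_eq)
  finally have cp: "char_poly A = (\<Prod>d\<leftarrow>ds. [:-d, 1:])" .
  have compl: "(\<Sum>t<n. us ! t $ i * us ! t $ j) = (if i = j then 1 else 0)" if "i < n" "j < n" for i j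
  proof -
    have "(Om * transpose_mat Om) $$ (i,j) = (\<Sum>t<n. us ! t $ i * us ! t $ j)"
      using that unfolding Om_def by (auto simp: scalar_prod_def atLeast0LessThan)
    thus ?thesis using OOt that by simp
  qed
  show ?thesis using es cp compl by blast
qed



lemma parseval:
  fixes A :: "real mat"
  assumes A: "A \<in> carrier_mat n n" and es: "eig_sys A n n us ds"
    and compl: "\<And>i j. i < n \<Longrightarrow> j < n \<Longrightarrow> (\<Sum>t<n. us ! t $ i * us ! t $ j) = (if i = j then 1 else 0)"
    and x: "x \<in> carrier_vec n"
  shows "x \<bullet> x = (\<Sum>t<n. (us ! t \<bullet> x)^2)" and "x \<bullet> (A *\<^sub>v x) = (\<Sum>t<n. ds ! t * (us ! t \<bullet> x)^2)"
proof -
  from es have uc: "\<And>t. t < n \<Longrightarrow> us ! t \<in> carrier_vec n"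
    and eig: "\<And>t. t < n \<Longrightarrow> A *\<^sub>v us ! t = ds ! t \<cdot>\<^sub>v us ! t"
    unfolding eig_sys_def by auto
  define u where "u t i = us ! t $ i" for t i
  define y where "y t = (\<Sum>i<n. u t i * x $ i)" for t
  have yt: "us ! t \<bullet> x = y t" for t using sp_sum[OF x] unfolding y_def u_def by simp
  have eig': "(\<Sum>j<n. A $$ (i,j) * u t j) = ds ! t * u t i" if "t < n" "i < n" for t i
  proof -
    have "(A *\<^sub>v us ! t) $ i = (ds ! t \<cdot>\<^sub>v us ! t) $ i" using eig[OF that(1)] by simp
    thus ?thesis using mv_sum[OF A uc[OF that(1)] that(2)] uc[OF that(1)] that(2) unfolding u_def by simp
  qed
  have xi: "x $ i = (\<Sum>t<n. u t i * y t)" if i: "i < n" for i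
  proof -
    have "(\<Sum>t<n. u t i * y t) = (\<Sum>t<n. \<Sum>j<n. u t i * u t j * x $ j)"
      unfolding y_def by (simp add: sum_distrib_left mult.assoc)
    also have "\<dots> = (\<Sum>j<n. \<Sum>t<n. u t i * u t j * x $ j)" by (rule sum.swap)
    also have "\<dots> = (\<Sum>j<n. (if i = j then 1 else 0) * x $ j)"
    proof (intro sum.cong refl)
      fix j assume "j \<in> {..<n}"
      hence "(\<Sum>t<n. u t i * u t j) = (if i = j then 1 else 0)" using compl i unfolding u_def by simp
      thus "(\<Sum>t<n. u t i * u t j * x $ j) = (if i = j then 1 else 0) * x $ j"
        by (simp add: sum_distrib_right[symmetric])
    qed
    also have "\<dots> = (\<Sum>j<n. if j = i then x $ j else 0)" by (intro sum.cong refl) auto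
    also have "\<dots> = x $ i" using i by (simp add: sum.delta)
    finally show ?thesis by simp
  qed
  have "x \<bullet> x = (\<Sum>i<n. x $ i * (\<Sum>t<n. u t i * y t))" using sp_sum[OF x] xi by simp
  also have "\<dots> = (\<Sum>i<n. \<Sum>t<n. y t * (u t i * x $ i))" by (simp add: sum_distrib_left algebra_simps)
  also have "\<dots> = (\<Sum>t<n. \<Sum>i<n. y t * (u t i * x $ i))" by (rule sum.swap)
  also have "\<dots> = (\<Sum>t<n. (y t)^2)" unfolding y_def by (simp add: sum_distrib_left[symmetric] power2_eq_square)
  finally show "x \<bullet> x = (\<Sum>t<n. (us ! t \<bullet> x)^2)" using yt by simp
  have Axi: "(A *\<^sub>v x) $ i = (\<Sum>t<n. ds ! t * u t i * y t)" if i: "i < n" for i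
  proof -
    have "(A *\<^sub>v x) $ i = (\<Sum>j<n. A $$ (i,j) * x $ j)" by (rule mv_sum[OF A x i])
    also have "\<dots> = (\<Sum>j<n. \<Sum>t<n. y t * (A $$ (i,j) * u t j))" using xi
      by (simp add: sum_distrib_left algebra_simps)
    also have "\<dots> = (\<Sum>t<n. \<Sum>j<n. y t * (A $$ (i,j) * u t j))" by (rule sum.swap)
    also have "\<dots> = (\<Sum>t<n. y t * (ds ! t * u t i))"
      by (simp add: sum_distrib_left[symmetric] eig' i)
    finally show ?thesis by (simp add: algebra_simps)
  qed
  have Axc: "A *\<^sub>v x \<in> carrier_vec n" using A x by simp
  have "x \<bullet> (A *\<^sub>v x) = (\<Sum>i<n. x $ i * (\<Sum>t<n. ds ! t * u t i * y t))" using sp_sum[OF Axc] Axi by simp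
  also have "\<dots> = (\<Sum>i<n. \<Sum>t<n. ds ! t * y t * (u t i * x $ i))" by (simp add: sum_distrib_left algebra_simps)
  also have "\<dots> = (\<Sum>t<n. \<Sum>i<n. ds ! t * y t * (u t i * x $ i))" by (rule sum.swap)
  also have "\<dots> = (\<Sum>t<n. ds ! t * (y t)^2)" unfolding y_def by (simp add: sum_distrib_left[symmetric] power2_eq_square mult.assoc)
  finally show "x \<bullet> (A *\<^sub>v x) = (\<Sum>t<n. ds ! t * (us ! t \<bullet> x)^2)" using yt by simp
qed

lemma sort_nth1_le:
  fixes xs :: "real list"
  assumes len: "length xs \<ge> 2"
  shows "sort xs ! 1 \<le> c \<longleftrightarrow> card {i. i < length xs \<and> xs ! i \<le> c} \<ge> 2"
proof -
  let ?s = "sort xs"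
  have "length (filter (\<lambda>x. x \<le> c) ?s) = length (filter (\<lambda>x. x \<le> c) xs)"
    by (metis mset_filter mset_sort size_mset)
  hence eq: "card {i. i < length ?s \<and> ?s ! i \<le> c} = card {i. i < length xs \<and> xs ! i \<le> c}"
    by (simp add: length_filter_conv_card)
  have ls: "length ?s = length xs" by simp
  have srt: "sorted ?s" by simp
  have "?s ! 1 \<le> c \<longleftrightarrow> card {i. i < length ?s \<and> ?s ! i \<le> c} \<ge> 2"
  proof
    assume a: "?s ! 1 \<le> c"
    have "?s ! 0 \<le> ?s ! 1" using sorted_nth_mono[OF srt, of 0 1] len ls by simp
    hence "{0, 1} \<subseteq> {i. i < length ?s \<and> ?s ! i \<le> c}" using a len ls by auto
    from card_mono[OF _ this] show "card {i. i < length ?s \<and> ?s ! i \<le> c} \<ge> 2" by simp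
  next
    assume a: "card {i. i < length ?s \<and> ?s ! i \<le> c} \<ge> 2"
    show "?s ! 1 \<le> c"
    proof (rule ccontr)
      assume "\<not> ?s ! 1 \<le> c"
      hence "{i. i < length ?s \<and> ?s ! i \<le> c} \<subseteq> {0}"
        using sorted_nth_mono[OF srt, of 1] by (auto, metis One_nat_def leI less_one order_trans)
      from card_mono[OF _ this] a show False by simp
    qed
  qed
  thus ?thesis using eq by simp
qed

lemma proots_linear_prod: "proots (\<Prod>d\<leftarrow>ds. [:-d, 1:]) = mset (ds :: real list)"
proof (induction ds)
  case (Cons d ds)
  have nz: "(\<Prod>d\<leftarrow>ds. [:-d, 1::real:]) \<noteq> 0" by (auto simp: prod_list_zero_iff)
  have e: "(\<Prod>d\<leftarrow>d # ds. [:-d, 1:]) = [:-d, 1:] * (\<Prod>d\<leftarrow>ds. [:-d, 1:])" by simp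
  have "proots ([:-d, 1:] * (\<Prod>d\<leftarrow>ds. [:-d, 1:])) = proots [:-d, 1:] + proots (\<Prod>d\<leftarrow>ds. [:-d, 1:])"
    by (rule proots_mult[OF _ nz]) simp
  also have "proots [:-d, 1:] = {#d#}" using proots_linear_factor[of "-d"] by simp
  finally show ?case using Cons e by simp
qed simp



lemma card_ge2_two: assumes "2 \<le> card S" shows "\<exists>x y. x \<in> S \<and> y \<in> S \<and> x \<noteq> y"
proof -
  from assms have fin: "finite S" and ne: "S \<noteq> {}" by (auto intro: ccontr simp: card_eq_0_iff)
  then obtain x where x: "x \<in> S" by auto
  have "card (S - {x}) \<ge> 1" using assms x fin by simp
  then obtain y where "y \<in> S - {x}" by (metis card.empty ex_in_conv not_one_le_zero)
  thus ?thesis using x by auto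
qed

lemma card_lt2_sub: assumes "finite S" "card S < 2" shows "\<exists>x. S \<subseteq> {x}"
proof (cases "S = {}")
  case False
  then obtain x where x: "x \<in> S" by auto
  have "card (S - {x}) = 0" using assms x by simp
  hence "S - {x} = {}" using assms by simp
  thus ?thesis by blast
qed auto

lemma abstract_l2:
  fixes A :: "real mat"
  assumes A: "A \<in> carrier_mat n n" and sym: "\<And>i j. i < n \<Longrightarrow> j < n \<Longrightarrow> A $$ (i,j) = A $$ (j,i)"
    and n2: "n \<ge> 2"
    and psd: "\<And>x. x \<in> carrier_vec n \<Longrightarrow> x \<bullet> (A *\<^sub>v x) \<ge> 0"
    and ker: "\<And>u w. u \<in> carrier_vec n \<Longrightarrow> w \<in> carrier_vec n \<Longrightarrow> A *\<^sub>v u = 0\<^sub>v n \<Longrightarrow> A *\<^sub>v w = 0\<^sub>v n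
               \<Longrightarrow> u \<bullet> u = 1 \<Longrightarrow> w \<bullet> w = 1 \<Longrightarrow> u \<bullet> w = 0 \<Longrightarrow> False"
    and test: "\<And>u. u \<in> carrier_vec n \<Longrightarrow> \<exists>x\<in>carrier_vec n. x \<bullet> x > 0 \<and> u \<bullet> x = 0 \<and> x \<bullet> (A *\<^sub>v x) \<le> 2 * (x \<bullet> x)"
  shows "0 < sorted_list_of_multiset (proots (char_poly A)) ! 1 \<and> sorted_list_of_multiset (proots (char_poly A)) ! 1 \<le> 2"
proof -
  obtain us ds where es: "eig_sys A n n us ds" and cp: "char_poly A = (\<Prod>d\<leftarrow>ds. [:-d, 1:])"
    and compl: "\<And>i j. i < n \<Longrightarrow> j < n \<Longrightarrow> (\<Sum>t<n. us ! t $ i * us ! t $ j) = (if i = j then 1 else 0)"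
    using spectral[OF A sym] by blast
  from es have lu: "length us = n" and ld: "length ds = n" and uc: "\<And>t. t < n \<Longrightarrow> us ! t \<in> carrier_vec n"
    and on: "\<And>s t. s < n \<Longrightarrow> t < n \<Longrightarrow> us ! s \<bullet> us ! t = (if s = t then 1 else 0)"
    and eig: "\<And>t. t < n \<Longrightarrow> A *\<^sub>v us ! t = ds ! t \<cdot>\<^sub>v us ! t"
    unfolding eig_sys_def by auto
  have sl: "sorted_list_of_multiset (proots (char_poly A)) = sort ds"
    unfolding cp proots_linear_prod by simp
  have len: "length ds \<ge> 2" using ld n2 by simp
  have dquad: "ds ! t = us ! t \<bullet> (A *\<^sub>v us ! t)" if t: "t < n" for t
    using eig[OF t] on[OF t t] uc[OF t] by (simp add: scalar_prod_smult_distrib)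
  have dnn: "ds ! t \<ge> 0" if t: "t < n" for t using dquad[OF t] psd[OF uc[OF t]] by simp
  have c0: "\<not> card {i. i < length ds \<and> ds ! i \<le> 0} \<ge> 2"
  proof
    assume "card {i. i < length ds \<and> ds ! i \<le> 0} \<ge> 2"
    then obtain i j where ij: "i < n" "j < n" "ds ! i \<le> 0" "ds ! j \<le> 0" "i \<noteq> j"
      using card_ge2_two ld by blast
    have "ds ! i = 0" "ds ! j = 0" using dnn ij by (auto intro: antisym)
    moreover have z: "\<And>v::real vec. v \<in> carrier_vec n \<Longrightarrow> 0 \<cdot>\<^sub>v v = 0\<^sub>v n" by (intro eq_vecI) auto
    ultimately have "A *\<^sub>v us ! i = 0\<^sub>v n" "A *\<^sub>v us ! j = 0\<^sub>v n" using eig ij uc by auto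
    thus False using ker[OF uc[OF ij(1)] uc[OF ij(2)]] on ij by simp
  qed
  have c2: "card {i. i < length ds \<and> ds ! i \<le> 2} \<ge> 2"
  proof (rule ccontr)
    assume "\<not> ?thesis"
    then obtain i1 where i1: "{i. i < length ds \<and> ds ! i \<le> 2} \<subseteq> {i1}"
      using card_lt2_sub[of "{i. i < length ds \<and> ds ! i \<le> 2}"] by force
    define i0 where "i0 = (if i1 < n then i1 else 0)"
    have i0: "i0 < n" using n2 unfolding i0_def by simp
    have big: "ds ! t > 2" if "t < n" "t \<noteq> i0" for t
      using i1 that ld unfolding i0_def by (cases "i1 < n") (force, force)
    obtain x where x: "x \<in> carrier_vec n" and xx: "x \<bullet> x > 0" and ux: "us ! i0 \<bullet> x = 0"
      and q: "x \<bullet> (A *\<^sub>v x) \<le> 2 * (x \<bullet> x)" using test[OF uc[OF i0]] by blast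
    note P = parseval[OF A es compl x]
    have "\<exists>t<n. (us ! t \<bullet> x)^2 \<noteq> 0"
    proof (rule ccontr)
      assume "\<not> ?thesis"
      hence "(\<Sum>t<n. (us ! t \<bullet> x)^2) = 0" by (intro sum.neutral) auto
      thus False using xx P(1) by simp
    qed
    then obtain t where t: "t < n" "(us ! t \<bullet> x)^2 \<noteq> 0" by blast
    have ti: "t \<noteq> i0" using t ux by auto
    have "0 < (\<Sum>s<n. (ds ! s - 2) * (us ! s \<bullet> x)^2)"
    proof (rule sum_pos2[of "{..<n}" t])
      show "0 < (ds ! t - 2) * (us ! t \<bullet> x)^2" using big[OF t(1) ti] t(2) by simp
      show "\<And>s. s \<in> {..<n} \<Longrightarrow> 0 \<le> (ds ! s - 2) * (us ! s \<bullet> x)^2"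
      proof -
        fix s assume s: "s \<in> {..<n}"
        show "0 \<le> (ds ! s - 2) * (us ! s \<bullet> x)^2"
        proof (cases "s = i0")
          case True thus ?thesis using ux by simp
        next
          case False thus ?thesis using big[of s] s by simp
        qed
      qed
    qed (use t in auto)
    also have "\<dots> = x \<bullet> (A *\<^sub>v x) - 2 * (x \<bullet> x)"
      by (simp only: P left_diff_distrib sum_subtractf sum_distrib_left mult.assoc)
    finally show False using q by simp
  qed
  show ?thesis unfolding sl using sort_nth1_le[OF len, of 0] sort_nth1_le[OF len, of 2] c0 c2 by auto
qed



locale gr =
  fixes N :: nat and F :: "nat \<Rightarrow> nat \<Rightarrow> bool"
  assumes Fdom: "F x y \<Longrightarrow> x < N \<and> y < N"
    and Fsym: "F x y \<Longrightarrow> F y x"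
    and Firr: "\<not> F x x"
begin

abbreviation "L \<equiv> laplacian N F"

lemma L_carrier: "L \<in> carrier_mat N N" unfolding laplacian_def by simp

lemma L_sym: "i < N \<Longrightarrow> j < N \<Longrightarrow> L $$ (i,j) = L $$ (j,i)"
  unfolding laplacian_def using Fsym by auto

lemma L_mult: assumes x: "x \<in> carrier_vec N" and i: "i < N"
  shows "(L *\<^sub>v x) $ i = (\<Sum>j<N. if F i j then x $ i - x $ j else 0)"
proof -
  have "(L *\<^sub>v x) $ i = (\<Sum>j<N. L $$ (i,j) * x $ j)" by (rule mv_sum[OF L_carrier x i])
  also have "\<dots> = (\<Sum>j<N. (if j = i then real (card {k. k < N \<and> F i k}) * x $ i else 0) + (if F i j then - x $ j else 0))"
    using i Firr unfolding laplacian_def by (intro sum.cong refl) auto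
  also have "\<dots> = (\<Sum>j<N. (if j = i then real (card {k. k < N \<and> F i k}) * x $ i else 0)) + (\<Sum>j<N. if F i j then - x $ j else 0)"
    by (rule sum.distrib)
  also have "(\<Sum>j<N. (if j = i then real (card {k. k < N \<and> F i k}) * x $ i else 0)) = real (card {k. k < N \<and> F i k}) * x $ i"
    using i by simp
  also have "(\<Sum>j<N. if F i j then - x $ j else 0) = - (\<Sum>j<N. if F i j then x $ j else 0)"
    by (subst sum_negf[symmetric]) (intro sum.cong refl, simp)
  also have "real (card {k. k < N \<and> F i k}) * x $ i + - (\<Sum>j<N. if F i j then x $ j else 0)
     = real (card {k. k < N \<and> F i k}) * x $ i - (\<Sum>j<N. if F i j then x $ j else 0)" by simp
  also have "real (card {k. k < N \<and> F i k}) = (\<Sum>j<N. if F i j then 1 else 0)"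
  proof -
    have e: "{k. k < N \<and> F i k} = {k \<in> {..<N}. F i k}" by auto
    have "real (card {k \<in> {..<N}. F i k}) = (\<Sum>j\<in>{k \<in> {..<N}. F i k}. (1::real))" by simp
    also have "\<dots> = (\<Sum>j<N. if F i j then 1 else 0)" by (rule sum.inter_filter) simp
    finally show ?thesis unfolding e .
  qed
  also have "(\<Sum>j<N. if F i j then 1 else 0) * x $ i - (\<Sum>j<N. if F i j then x $ j else 0)
     = (\<Sum>j<N. if F i j then x $ i - x $ j else 0)"
  proof -
    have "(\<Sum>j<N. if F i j then 1 else 0) * x $ i = (\<Sum>j<N. if F i j then x $ i else 0)"
      by (subst sum_distrib_right) (intro sum.cong refl, simp)
    moreover have "(\<Sum>j<N. if F i j then x $ i else 0) - (\<Sum>j<N. if F i j then x $ j else 0)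
        = (\<Sum>j<N. if F i j then x $ i - x $ j else 0)"
      by (subst sum_subtractf[symmetric]) (intro sum.cong refl, simp)
    ultimately show ?thesis by simp
  qed
  finally show ?thesis .
qed

lemma quadform: assumes x: "x \<in> carrier_vec N"
  shows "x \<bullet> (L *\<^sub>v x) = (\<Sum>i<N. \<Sum>j<N. if F i j then (x $ i - x $ j)^2 else 0) / 2"
proof -
  have Lx: "L *\<^sub>v x \<in> carrier_vec N" using L_carrier x by simp
  have S1: "x \<bullet> (L *\<^sub>v x) = (\<Sum>i<N. \<Sum>j<N. if F i j then x $ i * (x $ i - x $ j) else 0)"
    using sp_sum[OF Lx] L_mult[OF x] by (simp add: sum_distrib_left if_distrib cong: if_cong)
  also have "\<dots> = (\<Sum>j<N. \<Sum>i<N. if F i j then x $ i * (x $ i - x $ j) else 0)" by (rule sum.swap)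
  also have "\<dots> = (\<Sum>i<N. \<Sum>j<N. if F i j then x $ j * (x $ j - x $ i) else 0)"
  proof (intro sum.cong refl)
    fix i j
    show "(if F j i then x $ j * (x $ j - x $ i) else 0) = (if F i j then x $ j * (x $ j - x $ i) else 0)"
      using Fsym[of i j] Fsym[of j i] by auto
  qed
  finally have S2: "x \<bullet> (L *\<^sub>v x) = \<dots>" .
  have "2 * (x \<bullet> (L *\<^sub>v x)) = (\<Sum>i<N. \<Sum>j<N. if F i j then x $ i * (x $ i - x $ j) else 0)
      + (\<Sum>i<N. \<Sum>j<N. if F i j then x $ j * (x $ j - x $ i) else 0)" using S1 S2 by simp
  also have "\<dots> = (\<Sum>i<N. \<Sum>j<N. if F i j then (x $ i - x $ j)^2 else 0)"
    unfolding sum.distrib[symmetric] by (intro sum.cong refl) (simp add: power2_eq_square algebra_simps)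
  finally show ?thesis by simp
qed

lemma psd: assumes x: "x \<in> carrier_vec N" shows "x \<bullet> (L *\<^sub>v x) \<ge> 0"
proof -
  have "0 \<le> (\<Sum>i<N. \<Sum>j<N. if F i j then (x $ i - x $ j)^2 else (0::real))"
    by (intro sum_nonneg) auto
  thus ?thesis using quadform[OF x] by simp
qed

lemma kernel_edge: assumes x: "x \<in> carrier_vec N" and k: "L *\<^sub>v x = 0\<^sub>v N" and e: "F i j"
  shows "x $ i = x $ j"
proof -
  have "x \<bullet> (L *\<^sub>v x) = 0" using k x by simp
  hence S: "(\<Sum>i<N. \<Sum>j<N. if F i j then (x $ i - x $ j)^2 else 0) = 0" using quadform[OF x] by simp
  have ij: "i < N" "j < N" using Fdom e by auto
  have "(\<Sum>j<N. if F i j then (x $ i - x $ j)^2 else 0) = 0"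
    using S ij(1) by (subst (asm) sum_nonneg_eq_0_iff) (auto intro!: sum_nonneg)
  hence "(if F i j then (x $ i - x $ j)^2 else 0) = 0"
    using ij(2) by (subst (asm) sum_nonneg_eq_0_iff) auto
  thus ?thesis using e by simp
qed

end


locale chain =
  fixes n l :: nat and E :: "nat \<Rightarrow> nat \<Rightarrow> bool" and a b :: "nat \<Rightarrow> nat"
  assumes sg: "simple_graph n E" and cg: "connected_graph n E" and l2: "l \<ge> 2"
    and ab: "\<And>i. Suc i < l \<Longrightarrow> a i < n \<and> b i < n"
begin

abbreviation "F \<equiv> chain_graph n E l a b"
abbreviation "N \<equiv> l * n"

lemma n_pos: "n > 0" using cg unfolding connected_graph_def by simp

lemma Esym: "E u v \<Longrightarrow> E v u" and Edom: "E u v \<Longrightarrow> u < n \<and> v < n \<and> u \<noteq> v"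
  using sg unfolding simple_graph_def by auto

lemma Fdom: "F x y \<Longrightarrow> x < N \<and> y < N" unfolding chain_graph_def by auto

lemma Fsym: "F x y \<Longrightarrow> F y x" unfolding chain_graph_def using Esym by metis

lemma Firr: "\<not> F x x"
proof
  assume "F x x"
  then consider "E (x mod n) (x mod n)" | i where "Suc i < l" "x = i * n + a i" "x = Suc i * n + b i"
    unfolding chain_graph_def by auto
  thus False
  proof cases
    case 1 thus False using Edom by blast
  next
    case (2 i)
    have "i * n + a i < Suc i * n" using ab[OF 2(1)] by simp
    thus False using 2 by simp
  qed
qed

sublocale gr N F by unfold_locales (use Fdom Fsym Firr in auto)

lemma cross: assumes "F i j" "i < n" "\<not> j < n" shows "i = a 0 \<and> j = n + b 0"
proof -
  from assms(1) consider "i div n = j div n" | k where "Suc k < l" "i = k * n + a k" "j = Suc k * n + b k"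
    | k where "Suc k < l" "j = k * n + a k" "i = Suc k * n + b k"
    unfolding chain_graph_def by auto
  thus ?thesis
  proof cases
    case 1
    have "i div n = 0" using assms(2) by simp
    moreover have "j div n \<ge> 1" using assms(3) n_pos by (simp add: le_div_geq)
    ultimately show ?thesis using 1 by simp
  next
    case (2 k)
    have "k = 0" using 2 assms(2) by (cases k) auto
    thus ?thesis using 2 by simp
  next
    case (3 k)
    thus ?thesis using assms(2) by simp
  qed
qed

lemma bridge: assumes c: "Suc c < l" shows "F (c * n + a c) (Suc c * n + b c)"
proof -
  have "Suc c * n + b c < Suc (Suc c) * n" using ab[OF c] by simp
  also have "\<dots> \<le> l * n" using c by (intro mult_le_mono1) simp
  finally have lt2: "Suc c * n + b c < l * n" .
  have "c * n + a c < l * n" using lt2 ab[OF c] by simp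
  thus ?thesis unfolding chain_graph_def using lt2 c by blast
qed

lemma lift: assumes c: "c < l" and y: "y < n" and z: "z < n" and e: "E y z" shows "F (c * n + y) (c * n + z)"
proof -
  have lt: "c * n + v < l * n" if "v < n" for v
  proof -
    have "c * n + v < Suc c * n" using that by simp
    also have "\<dots> \<le> l * n" using c by (intro mult_le_mono1) simp
    finally show ?thesis .
  qed
  show ?thesis unfolding chain_graph_def using lt[OF y] lt[OF z] y z e by simp
qed

lemma const: assumes edge: "\<And>i j. F i j \<Longrightarrow> f i = f j" and x: "x < N"
  shows "f x = (f 0 :: real)"
proof -
  have liftc: "f (c * n + p) = f (c * n + q)" if c: "c < l" and r: "E\<^sup>*\<^sup>* p q" for c p q
    using r
  proof (induction rule: rtranclp_induct)
    case (step y z)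
    have "F (c * n + y) (c * n + z)" using lift[OF c _ _ step(2)] Edom[OF step(2)] by simp
    thus ?case using step edge by metis
  qed simp
  have conn: "E\<^sup>*\<^sup>* p q" if "p < n" "q < n" for p q using cg that unfolding connected_graph_def by auto
  have main: "\<forall>v<n. f (c * n + v) = f 0" if "c < l" for c
    using that
  proof (induction c)
    case 0
    show ?case using liftc[OF 0 conn[OF n_pos]] by simp
  next
    case (Suc c)
    have abc: "a c < n" "b c < n" using ab[OF Suc.prems] by auto
    show ?case
    proof (intro allI impI)
      fix v assume v: "v < n"
      have "f (Suc c * n + v) = f (Suc c * n + b c)" using liftc[OF Suc.prems conn[OF v abc(2)]] .
      also have "\<dots> = f (c * n + a c)" using edge[OF bridge[OF Suc.prems]] by simp
      also have "\<dots> = f 0" using Suc.IH Suc.prems abc by simp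
      finally show "f (Suc c * n + v) = f 0" .
    qed
  qed
  have "x div n < l" using x by (simp add: less_mult_imp_div_less)
  moreover have "x mod n < n" using n_pos by simp
  ultimately have "f (x div n * n + x mod n) = f 0" using main by blast
  thus ?thesis by simp
qed

end


context chain begin

lemma nN: "n < N"
proof -
  have "2 * n \<le> l * n" using l2 by (intro mult_le_mono1)
  thus ?thesis using n_pos by simp
qed

lemma kernel_ok:
  assumes u: "u \<in> carrier_vec N" and w: "w \<in> carrier_vec N" and ku: "L *\<^sub>v u = 0\<^sub>v N" and kw: "L *\<^sub>v w = 0\<^sub>v N"
    and uu: "u \<bullet> u = 1" and ww: "w \<bullet> w = 1" and uw: "u \<bullet> w = 0"
  shows False
proof -
  have cu: "u $ i = u $ 0" if "i < N" for i
    using const[of "\<lambda>i. u $ i", OF _ that] kernel_edge[OF u ku] by blast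
  have cw: "w $ i = w $ 0" if "i < N" for i
    using const[of "\<lambda>i. w $ i", OF _ that] kernel_edge[OF w kw] by blast
  have "u \<bullet> u = real N * (u $ 0 * u $ 0)" using sp_sum[OF u] cu by simp
  moreover have "w \<bullet> w = real N * (w $ 0 * w $ 0)" using sp_sum[OF w] cw by simp
  moreover have "u \<bullet> w = real N * (u $ 0 * w $ 0)" using sp_sum[OF w] cu cw by simp
  moreover have "real N > 0" using nN by simp
  ultimately show False using uu ww uw by auto
qed

lemma test_ok:
  assumes u: "u \<in> carrier_vec N"
  shows "\<exists>x\<in>carrier_vec N. x \<bullet> x > 0 \<and> u \<bullet> x = 0 \<and> x \<bullet> (L *\<^sub>v x) \<le> 2 * (x \<bullet> x)"
proof -
  define s1 where "s1 = (\<Sum>i<n. u $ i)"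
  define s2 where "s2 = (\<Sum>i<N. u $ i)"
  define \<alpha> where "\<alpha> = (if s1 = 0 \<and> s2 = 0 then 1 else s2)"
  define \<beta> where "\<beta> = (if s1 = 0 \<and> s2 = 0 then 0 else - s1)"
  have ab0: "(\<alpha> + \<beta>)^2 + \<beta>^2 > 0"
  proof (cases "s1 = 0 \<and> s2 = 0")
    case True thus ?thesis unfolding \<alpha>_def \<beta>_def by simp
  next
    case False
    hence ab: "\<alpha> = s2" "\<beta> = - s1" unfolding \<alpha>_def \<beta>_def by auto
    show ?thesis
    proof (cases "s1 = 0")
      case True
      hence "s2 \<noteq> 0" using False by simp
      thus ?thesis using True ab by simp
    next
      case f: False
      have "0 < \<beta>^2" using ab f by simp
      moreover have "0 \<le> (\<alpha> + \<beta>)^2" by simp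
      ultimately show ?thesis by linarith
    qed
  qed
  have absum: "\<alpha> * s1 + \<beta> * s2 = 0" unfolding \<alpha>_def \<beta>_def by auto
  define x where "x = vec N (\<lambda>i. (if i < n then \<alpha> else 0) + \<beta>)"
  have xc: "x \<in> carrier_vec N" unfolding x_def by simp
  have xi: "x $ i = (if i < n then \<alpha> else 0) + \<beta>" if "i < N" for i using that unfolding x_def by simp
  have "u \<bullet> x = (\<Sum>i<N. \<alpha> * (if i < n then u $ i else 0) + \<beta> * u $ i)"
    unfolding sp_sum[OF xc] using xi by (intro sum.cong refl) (auto simp: algebra_simps)
  also have "\<dots> = \<alpha> * (\<Sum>i<N. if i < n then u $ i else 0) + \<beta> * s2"
    unfolding s2_def by (simp add: sum.distrib sum_distrib_left)
  also have "(\<Sum>i<N. if i < n then u $ i else 0) = s1"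
  proof -
    have "(\<Sum>i<N. if i < n then u $ i else 0) = (\<Sum>i\<in>{..<N} \<inter> {..<n}. u $ i)"
      using sum.inter_restrict[of "{..<N}" "\<lambda>i. u $ i" "{..<n}"] by simp
    also have "{..<N} \<inter> {..<n} = {..<n}" using nN by (simp add: Int_absorb1)
    finally show ?thesis unfolding s1_def .
  qed
  finally have ux: "u \<bullet> x = 0" using absum by simp
  define p where "p = a 0"
  define q where "q = n + b 0"
  have pq: "p < n" "n \<le> q" "q < N" "p < N"
  proof -
    have ab0': "a 0 < n" "b 0 < n" using ab[of 0] l2 by auto
    show "p < n" "n \<le> q" unfolding p_def q_def using ab0' by auto
    show "q < N" using bridge[of 0] l2 Fdom unfolding q_def by auto
    show "p < N" unfolding p_def using less_trans[OF ab0'(1) nN] .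
  qed
  have Fpq: "F p q" "F q p" using bridge[of 0] l2 Fsym unfolding p_def q_def by auto
  have g: "(if F i j then (x $ i - x $ j)^2 else 0) = (if i = p \<and> j = q then \<alpha>^2 else 0) + (if i = q \<and> j = p then \<alpha>^2 else 0)"
    if ij: "i < N" "j < N" for i j
  proof -
    have xi1: "x $ i = (if i < n then \<alpha> else 0) + \<beta>" by (rule xi[OF ij(1)])
    have xj1: "x $ j = (if j < n then \<alpha> else 0) + \<beta>" by (rule xi[OF ij(2)])
    have qp: "q \<noteq> p" using pq(1,2) by linarith
    show ?thesis
    proof (cases "F i j")
      case True
      show ?thesis
      proof (cases "i < n"; cases "j < n")
        assume a: "i < n" "j < n"
        have "i \<noteq> q" "j \<noteq> q" using a pq(2) by linarith+
        thus ?thesis using True xi1 xj1 a by simp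
      next
        assume a: "i < n" "\<not> j < n"
        with cross[OF True] have "i = p" "j = q" unfolding p_def q_def by auto
        thus ?thesis using True xi1 xj1 a qp by simp
      next
        assume a: "\<not> i < n" "j < n"
        with cross[OF Fsym[OF True]] have "j = p" "i = q" unfolding p_def q_def by auto
        thus ?thesis using True xi1 xj1 a qp by (simp add: power2_eq_square)
      next
        assume a: "\<not> i < n" "\<not> j < n"
        have "i \<noteq> p" "j \<noteq> p" using a pq(1) by linarith+
        thus ?thesis using True xi1 xj1 a by simp
      qed
    next
      case False
      have h1: "\<not> (i = p \<and> j = q)" using False Fpq(1) by blast
      have h2: "\<not> (i = q \<and> j = p)" using False Fpq(2) by blast
      have e1: "(if F i j then (x $ i - x $ j)^2 else 0) = (0::real)" using False by (rule if_not_P)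
      have e2: "(if i = p \<and> j = q then \<alpha>^2 else 0) = (0::real)" using h1 by (rule if_not_P)
      have e3: "(if i = q \<and> j = p then \<alpha>^2 else 0) = (0::real)" using h2 by (rule if_not_P)
      show ?thesis unfolding e1 e2 e3 by simp
    qed
  qed
  have "(\<Sum>i<N. \<Sum>j<N. if F i j then (x $ i - x $ j)^2 else 0)
      = (\<Sum>i<N. \<Sum>j<N. (if i = p \<and> j = q then \<alpha>^2 else 0) + (if i = q \<and> j = p then \<alpha>^2 else 0))"
    by (intro sum.cong refl) (rule g; simp)
  also have "\<dots> = (\<Sum>i<N. (if i = p then \<alpha>^2 else 0) + (if i = q then \<alpha>^2 else 0))"
  proof (intro sum.cong refl)
    fix i :: nat
    have d: "(\<Sum>j<N. if i = r \<and> j = s then \<alpha>^2 else 0) = (if i = r then \<alpha>^2 else 0)" if "s < N" for r s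
      using that by (cases "i = r") simp_all
    show "(\<Sum>j<N. (if i = p \<and> j = q then \<alpha>^2 else 0) + (if i = q \<and> j = p then \<alpha>^2 else 0))
       = (if i = p then \<alpha>^2 else 0) + (if i = q then \<alpha>^2 else 0)"
      unfolding sum.distrib d[OF pq(3)] d[OF pq(4)] ..
  qed
  also have "\<dots> = 2 * \<alpha>^2" unfolding sum.distrib using pq(3,4) by simp
  finally have xLx: "x \<bullet> (L *\<^sub>v x) = \<alpha>^2" unfolding quadform[OF xc] by simp
  have x0: "x $ 0 = \<alpha> + \<beta>" using xi[OF less_trans[OF n_pos nN]] n_pos by simp
  have xn: "x $ n = \<beta>" using xi[OF nN] by simp
  have "x \<bullet> x = (\<Sum>i<N. (x $ i)^2)" using sp_sum[OF xc] by (simp add: power2_eq_square)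
  also have "\<dots> \<ge> (\<Sum>i\<in>{0, n}. (x $ i)^2)"
    by (rule sum_mono2) (use nN n_pos in auto)
  also have "(\<Sum>i\<in>{0, n}. (x $ i)^2) = (\<alpha> + \<beta>)^2 + \<beta>^2"
    using n_pos x0 xn by simp
  finally have xx: "x \<bullet> x \<ge> (\<alpha> + \<beta>)^2 + \<beta>^2" .
  have A1: "\<alpha>^2 \<le> 2 * ((\<alpha> + \<beta>)^2 + \<beta>^2)"
  proof -
    have "0 \<le> (\<alpha> + 2 * \<beta>)^2" by simp
    thus ?thesis by (simp add: power2_eq_square algebra_simps)
  qed
  have A2: "2 * ((\<alpha> + \<beta>)^2 + \<beta>^2) \<le> 2 * (x \<bullet> x)" using xx by simp
  have "\<alpha>^2 \<le> 2 * (x \<bullet> x)" by (rule order_trans[OF A1 A2])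
  hence "x \<bullet> (L *\<^sub>v x) \<le> 2 * (x \<bullet> x)" unfolding xLx .
  moreover have "x \<bullet> x > 0" using xx ab0 by (rule less_le_trans[rotated])
  ultimately show ?thesis using xc ux by blast
qed

end

theorem theorem6p4:
  fixes n l :: nat and E :: "nat \<Rightarrow> nat \<Rightarrow> bool" and a b :: "nat \<Rightarrow> nat"
  assumes "simple_graph n E"
    and "connected_graph n E"
    and "l \<ge> 2"
    and "\<And>i. Suc i < l \<Longrightarrow> a i < n \<and> b i < n"
  shows "0 < lambda2 (l * n) (chain_graph n E l a b) \<and> lambda2 (l * n) (chain_graph n E l a b) \<le> 2"
proof -
  interpret chain n l E a b by unfold_locales (use assms in auto)
  have "2 \<le> N" using l2 n_pos mult_le_mono[of 2 l 1 n] by simp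
  from abstract_l2[OF L_carrier L_sym this psd kernel_ok test_ok]
  show ?thesis unfolding lambda2_def lap_eigenvalues_def .
qed


end
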